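(* Let $\varphi:G\to H$ be a surjective group homomorphism. Then the homomorphism $f_\varphi:H_2(H)\to K_\varphi/\Gamma_\varphi$ induced by the central extension $$1\to K_\varphi/\Gamma_\varphi\to G/\Gamma_\varphi\xrightarrow{\ \varphi\ } H\to 1$$ coincides with the composition $$\psi\circ(i\circ\varepsilon)^{-1}\circ\partial:H_2(H)\to H_1(G,H)\to H_1(\mathrm{Coker}(\delta_\varphi))\to K_\varphi/\Gamma_\varphi .$$
   Context: Group homology: for a group $G$ let $C_n(G)=\mathbb Z[G^n]$ (free abelian group on $G^n$) with differential $d=\sum_{i=0}^n(-1)^id_i$, where $d_0(g_1,\dots,g_n)=(g_2,\dots,g_n)$, $d_i(g_1,\dots,g_n)=(g_1,\dots,g_ig_{i+1},\dots,g_n)$ for $1\le i\le n-1$, $d_n(g_1,\dots,g_n)=(g_1,\dots,g_{n-1})$; $H_n(G)$ is its homology. For a homomorphism $\varphi:G\to H$, $\varphi_*$ acts coordinatewise on chains. The relative complex has $\mathrm{Tot}_n=\mathbb Z[H^{n+1}]\oplus\mathbb Z[G^n]$ with differential $d(\varphi)(y,x)=(dy+\varphi_*(x),-dx)$; its homology is $H_n(G,H)$. For $\varphi$ surjective, the boundary map $\partial:H_{n+1}(H)\to H_n(G,H)$ is defined (with this sign convention) by $\partial[z]=[(0,-d\tilde z)]$, where $z$ is a cycle and $\tilde z\in\mathbb Z[G^{n+1}]$ is any chain with $\varphi_*(\tilde z)=z$. Cokernel complex: $G^n\times_{H^n}G^n$ is the set of pairs $(g^1,g^2)\in G^n\times G^n$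 with $\varphi_*(g^1)=\varphi_*(g^2)$; $\mathrm{Coker}_n(\delta_\varphi)$ is $\mathbb Z[G^n\times_{H^n}G^n]$ modulo the relations $(g^1,g^2)+(g^2,g^3)\sim(g^1,g^3)$, with differential $(g^1,g^2)\mapsto\sum_{i=0}^n(-1)^i(d_ig^1,d_ig^2)$. The chain map $i\circ\varepsilon:\mathrm{Coker}_n(\delta_\varphi)\to\mathrm{Tot}_n$, $(g^1,g^2)\mapsto(0,g^1-g^2)$, induces an isomorphism $H_n(\mathrm{Coker}(\delta_\varphi))\cong H_n(G,H)$ when $\varphi$ is surjective (a known result of M. Levine). $K_\varphi=\ker\varphi$ and $\Gamma_\varphi$ is the smallest normal subgroup of $G$ containing all $gkg^{-1}k^{-1}$ with $g\in G$, $k\in K_\varphi$. The map $\psi:\mathbb Z[G\times_HG]\to K_\varphi/\Gamma_\varphi$, $\sum_iz_i(x_i,y_i)\mapsto\prod_i(x_iy_i^{-1})^{z_i}$ descends to an isomorphism $\psi:H_1(\mathrm{Coker}(\delta_\varphi))\to K_\varphi/\Gamma_\varphi$ (Levine). The map $f_\varphi$ is explicitly: write a class in $H_2(H)$ as represented by a cycle $x=\sum_{i=1}^{2n}(-1)^i(x_i,y_i)$ and choose any set-theoretic section $t:H\to G$ of $\varphi$; then $f_\varphi[x]=\Big(\prod_{k=1}^n t(x_{2k})t(y_{2k})t(x_{2k}y_{2k})^{-1}\Big)\cdot\Big(\prod_{k=1}^n t(x_{2k-1})t(y_{2k-1})t(x_{2k-1}y_{2k-1})^{-1}\Big)^{-1}\in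 K_\varphi/\Gamma_\varphi$. *)

theory Defs
  imports "HOL-Algebra.Algebra"
begin

definition supp :: "('a \<Rightarrow> int) \<Rightarrow> 'a set" where
  "supp c = {l. c l \<noteq> 0}"

text \<open>C_n(M) = Z[M^n]: finitely supported integer functions on tuples (lists of length n).\<close>
definition chains :: "('a, 'b) monoid_scheme \<Rightarrow> nat \<Rightarrow> ('a list \<Rightarrow> int) set" where
  "chains M n = {c. finite (supp c) \<and> (\<forall>l\<in>supp c. length l = n \<and> set l \<subseteq> carrier M)}"

definition face :: "('a, 'b) monoid_scheme \<Rightarrow> nat \<Rightarrow> 'a list \<Rightarrow> 'a list" where
  "face M i l = (if i = 0 then tl l
                 else if i = length l then butlast l
                 else take (i - 1) l @ [l ! (i - 1) \<otimes>\<^bsub>M\<^esub> l ! i] @ drop (i + 1) l)"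

text \<open>Differential d = sum_{i=0}^n (-1)^i d_i (extended linearly; zero on 0-chains).\<close>
definition bd :: "('a, 'b) monoid_scheme \<Rightarrow> ('a list \<Rightarrow> int) \<Rightarrow> ('a list \<Rightarrow> int)" where
  "bd M c = (\<lambda>m. \<Sum>l\<in>supp c. \<Sum>i\<in>{i. 1 \<le> length l \<and> i \<le> length l \<and> face M i l = m}.
                 (-1) ^ i * c l)"

definition push :: "('a \<Rightarrow> 'b) \<Rightarrow> ('a \<Rightarrow> int) \<Rightarrow> ('b \<Rightarrow> int)" where
  "push f c = (\<lambda>m. \<Sum>l\<in>{l\<in>supp c. f l = m}. c l)"

text \<open>Differential of the relative complex Tot_n = Z[H^{n+1}] + Z[G^n]:
  d(y,x) = (dy + phi_*(x), -dx).\<close>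
definition tot_bd :: "('g, 'a) monoid_scheme \<Rightarrow> ('h, 'b) monoid_scheme \<Rightarrow> ('g \<Rightarrow> 'h)
    \<Rightarrow> ('h list \<Rightarrow> int) \<times> ('g list \<Rightarrow> int) \<Rightarrow> ('h list \<Rightarrow> int) \<times> ('g list \<Rightarrow> int)" where
  "tot_bd G H \<phi> w = ((\<lambda>m. bd H (fst w) m + push (map \<phi>) (snd w) m), (\<lambda>m. - bd G (snd w) m))"

text \<open>Representatives of Coker_n: Z[G^n x_{H^n} G^n].\<close>
definition coker_chains :: "('g, 'a) monoid_scheme \<Rightarrow> ('g \<Rightarrow> 'h) \<Rightarrow> nat
    \<Rightarrow> (('g list \<times> 'g list) \<Rightarrow> int) set" where
  "coker_chains G \<phi> n = {c. finite (supp c) \<and>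
      (\<forall>p\<in>supp c. length (fst p) = n \<and> length (snd p) = n \<and>
          set (fst p) \<subseteq> carrier G \<and> set (snd p) \<subseteq> carrier G \<and>
          map \<phi> (fst p) = map \<phi> (snd p))}"

text \<open>The map epsilon: (g1,g2) |-> g1 - g2 (so i o epsilon maps c to (0, eps c)).\<close>
definition eps :: "(('g list \<times> 'g list) \<Rightarrow> int) \<Rightarrow> ('g list \<Rightarrow> int)" where
  "eps c = (\<lambda>l. \<Sum>p\<in>supp c. (if fst p = l then c p else 0) - (if snd p = l then c p else 0))"

definition Gamma :: "('g, 'a) monoid_scheme \<Rightarrow> ('h, 'b) monoid_scheme \<Rightarrow> ('g \<Rightarrow> 'h) \<Rightarrow> 'g set" where
  "Gamma G H \<phi> = \<Inter>{N. normal N G \<and>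
      {g \<otimes>\<^bsub>G\<^esub> k \<otimes>\<^bsub>G\<^esub> inv\<^bsub>G\<^esub> g \<otimes>\<^bsub>G\<^esub> inv\<^bsub>G\<^esub> k | g k.
         g \<in> carrier G \<and> k \<in> kernel G H \<phi>} \<subseteq> N}"

definition KmodGamma :: "('g, 'a) monoid_scheme \<Rightarrow> ('h, 'b) monoid_scheme \<Rightarrow> ('g \<Rightarrow> 'h)
    \<Rightarrow> 'g set monoid" where
  "KmodGamma G H \<phi> = (G Mod (Gamma G H \<phi>))
      \<lparr>carrier := (\<lambda>k. Gamma G H \<phi> #>\<^bsub>G\<^esub> k) ` kernel G H \<phi>\<rparr>"

definition psi :: "('g, 'a) monoid_scheme \<Rightarrow> ('h, 'b) monoid_scheme \<Rightarrow> ('g \<Rightarrow> 'h)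
    \<Rightarrow> (('g list \<times> 'g list) \<Rightarrow> int) \<Rightarrow> 'g set" where
  "psi G H \<phi> c = finprod (KmodGamma G H \<phi>)
      (\<lambda>p. (Gamma G H \<phi> #>\<^bsub>G\<^esub> (hd (fst p) \<otimes>\<^bsub>G\<^esub> inv\<^bsub>G\<^esub> (hd (snd p))))
             [^]\<^bsub>KmodGamma G H \<phi>\<^esub> (c p))
      (supp c)"

definition ordprod :: "('a, 'b) monoid_scheme \<Rightarrow> 'a list \<Rightarrow> 'a" where
  "ordprod M xs = foldr (\<lambda>a b. a \<otimes>\<^bsub>M\<^esub> b) xs \<one>\<^bsub>M\<^esub>"

definition zchain :: "nat \<Rightarrow> (nat \<Rightarrow> 'h) \<Rightarrow> (nat \<Rightarrow> 'h) \<Rightarrow> ('h list \<Rightarrow> int)" where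
  "zchain n xs ys = (\<lambda>l. \<Sum>i\<in>{1..2*n}. if l = [xs i, ys i] then (-1) ^ i else 0)"

definition fphi :: "('g, 'a) monoid_scheme \<Rightarrow> ('h, 'b) monoid_scheme \<Rightarrow> ('g \<Rightarrow> 'h) \<Rightarrow> ('h \<Rightarrow> 'g)
    \<Rightarrow> nat \<Rightarrow> (nat \<Rightarrow> 'h) \<Rightarrow> (nat \<Rightarrow> 'h) \<Rightarrow> 'g set" where
  "fphi G H \<phi> t n xs ys =
     (let Q = G Mod (Gamma G H \<phi>);
          e = (\<lambda>i. Gamma G H \<phi> #>\<^bsub>G\<^esub>
                 (t (xs i) \<otimes>\<^bsub>G\<^esub> t (ys i) \<otimes>\<^bsub>G\<^esub> inv\<^bsub>G\<^esub> (t (xs i \<otimes>\<^bsub>H\<^esub> ys i))))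
      in ordprod Q (map (\<lambda>k. e (2 * k)) [1..<n + 1])
         \<otimes>\<^bsub>Q\<^esub> inv\<^bsub>Q\<^esub> (ordprod Q (map (\<lambda>k. e (2 * k - 1)) [1..<n + 1])))"

end

theory Submission
  imports Defs
begin


definition Lin :: "('c,'d) monoid_scheme \<Rightarrow> ('a \<Rightarrow> 'c) \<Rightarrow> ('a \<Rightarrow> int) \<Rightarrow> 'a set \<Rightarrow> 'c" where
  "Lin A f u S = finprod A (\<lambda>l. f l [^]\<^bsub>A\<^esub> u l) S"

context comm_group begin

lemma Lin_closed: "f \<in> UNIV \<rightarrow> carrier G \<Longrightarrow> Lin G f u S \<in> carrier G"
  unfolding Lin_def by (auto intro!: finprod_closed)

lemma Lin_add: assumes "f \<in> UNIV \<rightarrow> carrier G"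
  shows "Lin G f (\<lambda>l. u l + v l) S = Lin G f u S \<otimes> Lin G f v S"
proof -
  have "Lin G f (\<lambda>l. u l + v l) S = finprod G (\<lambda>l. f l [^] u l \<otimes> f l [^] v l) S"
    unfolding Lin_def using assms by (intro finprod_cong') (auto simp: int_pow_mult Pi_iff)
  also have "\<dots> = Lin G f u S \<otimes> Lin G f v S"
    unfolding Lin_def using assms by (intro finprod_multf) auto
  finally show ?thesis .
qed

lemma Lin_zero: "Lin G f (\<lambda>l. 0) S = \<one>"
  unfolding Lin_def by simp

lemma Lin_neg: assumes "f \<in> UNIV \<rightarrow> carrier G"
  shows "Lin G f (\<lambda>l. - u l) S = inv (Lin G f u S)"
proof -
  have "Lin G f (\<lambda>l. - u l) S \<otimes> Lin G f u S = \<one>"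
    using Lin_add[OF assms, of "\<lambda>l. - u l" u S] Lin_zero[of f S] by simp
  thus ?thesis using Lin_closed[OF assms] by (metis inv_equality)
qed

lemma Lin_sum: assumes "f \<in> UNIV \<rightarrow> carrier G" "finite P"
  shows "Lin G f (\<lambda>l. \<Sum>p\<in>P. g p l) S = finprod G (\<lambda>p. Lin G f (g p) S) P"
  using assms(2)
proof (induction P rule: finite_induct)
  case empty thus ?case using Lin_zero by simp
next
  case (insert q P)
  have "Lin G f (\<lambda>l. \<Sum>p\<in>insert q P. g p l) S = Lin G f (\<lambda>l. g q l + (\<Sum>p\<in>P. g p l)) S"
    using insert by simp
  also have "\<dots> = Lin G f (g q) S \<otimes> Lin G f (\<lambda>l. \<Sum>p\<in>P. g p l) S"
    by (rule Lin_add[OF assms(1)])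
  finally show ?case using insert Lin_closed[OF assms(1)] by simp
qed

lemma Lin_delta: assumes "f \<in> UNIV \<rightarrow> carrier G" "finite S" "a \<in> S"
  shows "Lin G f (\<lambda>l. if l = a then k else 0) S = f a [^] (k::int)"
proof -
  have "Lin G f (\<lambda>l. if l = a then k else 0) S = finprod G (\<lambda>l. if l = a then f a [^] k else \<one>) S"
    unfolding Lin_def using assms by (intro finprod_cong') (auto simp: Pi_iff)
  also have "\<dots> = f a [^] k"
    using finprod_singleton_swap[OF assms(3,2), of "\<lambda>_. f a [^] k"] assms by (simp add: Pi_iff)
  finally show ?thesis .
qed

lemma Lin_mono: assumes "f \<in> UNIV \<rightarrow> carrier G" "finite T" "S \<subseteq> T" "\<And>l. l \<in> T - S \<Longrightarrow> u l = 0"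
  shows "Lin G f u S = Lin G f u T"
  unfolding Lin_def using assms
  by (intro finprod_mono_neutral_cong_left) (auto simp: Pi_iff)

lemma Lin_cong: "S = T \<Longrightarrow> (\<And>l. l \<in> T \<Longrightarrow> u l = v l) \<Longrightarrow> f \<in> UNIV \<rightarrow> carrier G \<Longrightarrow> Lin G f u S = Lin G f v T"
  unfolding Lin_def by (intro finprod_cong') auto

end


definition kap :: "('g, 'a) monoid_scheme \<Rightarrow> ('h, 'b) monoid_scheme \<Rightarrow> ('g \<Rightarrow> 'h) \<Rightarrow> ('h \<Rightarrow> 'g) \<Rightarrow> 'g list \<Rightarrow> 'g set" where
  "kap G H \<phi> t l = (if length l = 1 \<and> hd l \<in> carrier G
      then Gamma G H \<phi> #>\<^bsub>G\<^esub> (hd l \<otimes>\<^bsub>G\<^esub> inv\<^bsub>G\<^esub> t (\<phi> (hd l))) else Gamma G H \<phi>)"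

definition bet :: "('g, 'a) monoid_scheme \<Rightarrow> ('h, 'b) monoid_scheme \<Rightarrow> ('g \<Rightarrow> 'h) \<Rightarrow> ('h \<Rightarrow> 'g) \<Rightarrow> 'h list \<Rightarrow> 'g set" where
  "bet G H \<phi> t l = (if length l = 2 \<and> set l \<subseteq> carrier H
      then Gamma G H \<phi> #>\<^bsub>G\<^esub> (t (l!0) \<otimes>\<^bsub>G\<^esub> t (l!1) \<otimes>\<^bsub>G\<^esub> inv\<^bsub>G\<^esub> t (l!0 \<otimes>\<^bsub>H\<^esub> l!1)) else Gamma G H \<phi>)"

context group begin
lemma gA1: "x \<in> carrier G \<Longrightarrow> y \<in> carrier G \<Longrightarrow> inv x \<otimes> (x \<otimes> y) = y"
  by (simp add: m_assoc[symmetric])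
lemma gA2: "x \<in> carrier G \<Longrightarrow> y \<in> carrier G \<Longrightarrow> x \<otimes> (inv x \<otimes> y) = y"
  by (simp add: m_assoc[symmetric])

lemma aux_kap:
  assumes c: "a1 \<in> carrier G" "b1 \<in> carrier G" "a2 \<in> carrier G" "b2 \<in> carrier G" "b12 \<in> carrier G"
    and hyp: "(a2 \<otimes> inv b2) \<otimes> b1 = b1 \<otimes> (a2 \<otimes> inv b2)"
  shows "(a1 \<otimes> inv b1) \<otimes> (a2 \<otimes> inv b2) \<otimes> (b1 \<otimes> b2 \<otimes> inv b12) = a1 \<otimes> a2 \<otimes> inv b12"
proof -
  have "(a1 \<otimes> inv b1) \<otimes> (a2 \<otimes> inv b2) \<otimes> (b1 \<otimes> b2 \<otimes> inv b12)
      = a1 \<otimes> (inv b1 \<otimes> ((a2 \<otimes> inv b2) \<otimes> b1)) \<otimes> (b2 \<otimes> inv b12)"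
    using c by (simp add: m_assoc)
  also have "\<dots> = a1 \<otimes> (inv b1 \<otimes> (b1 \<otimes> (a2 \<otimes> inv b2))) \<otimes> (b2 \<otimes> inv b12)"
    by (simp only: hyp)
  also have "\<dots> = a1 \<otimes> a2 \<otimes> inv b12"
    using c by (simp add: m_assoc gA1 gA2)
  finally show ?thesis .
qed

lemma aux_coc:
  assumes c: "b1 \<in> carrier G" "b2 \<in> carrier G" "b3 \<in> carrier G" "b12 \<in> carrier G" "b23 \<in> carrier G" "b123 \<in> carrier G"
    and hyp: "(b2 \<otimes> b3 \<otimes> inv b23) \<otimes> b1 = b1 \<otimes> (b2 \<otimes> b3 \<otimes> inv b23)"
  shows "(b1 \<otimes> b2 \<otimes> inv b12) \<otimes> (b12 \<otimes> b3 \<otimes> inv b123) = (b2 \<otimes> b3 \<otimes> inv b23) \<otimes> (b1 \<otimes> b23 \<otimes> inv b123)"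
proof -
  have "(b2 \<otimes> b3 \<otimes> inv b23) \<otimes> (b1 \<otimes> b23 \<otimes> inv b123) = ((b2 \<otimes> b3 \<otimes> inv b23) \<otimes> b1) \<otimes> (b23 \<otimes> inv b123)"
    using c by (simp add: m_assoc)
  also have "\<dots> = (b1 \<otimes> (b2 \<otimes> b3 \<otimes> inv b23)) \<otimes> (b23 \<otimes> inv b123)"
    by (simp only: hyp)
  also have "\<dots> = (b1 \<otimes> b2 \<otimes> inv b12) \<otimes> (b12 \<otimes> b3 \<otimes> inv b123)"
    using c by (simp add: m_assoc gA1 gA2)
  finally show ?thesis by simp
qed

lemma aux_psi: "a \<in> carrier G \<Longrightarrow> b \<in> carrier G \<Longrightarrow> s \<in> carrier G \<Longrightarrow> (a \<otimes> inv b) \<otimes> (b \<otimes> inv s) = a \<otimes> inv s"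
  by (simp add: m_assoc gA1 gA2)
end

declare mult_FactGroup[simp del]

locale fsetup =
  fixes G :: "'g monoid" and H :: "'h monoid" and \<phi> :: "'g \<Rightarrow> 'h" and t :: "'h \<Rightarrow> 'g"
  assumes grpG: "group G" and grpH: "group H" and hom: "\<phi> \<in> hom G H"
    and sec: "\<forall>h\<in>carrier H. t h \<in> carrier G \<and> \<phi> (t h) = h"
begin

abbreviation "\<Gamma> \<equiv> Gamma G H \<phi>"
abbreviation "K \<equiv> kernel G H \<phi>"
abbreviation "Q \<equiv> G Mod \<Gamma>"
abbreviation "A \<equiv> KmodGamma G H \<phi>"
abbreviation "\<pi> \<equiv> (\<lambda>x. \<Gamma> #>\<^bsub>G\<^esub> x)"

sublocale gh: group_hom G H \<phi>
  using grpG grpH hom by (simp add: group_hom_def group_hom_axioms_def)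

abbreviation "C \<equiv> {g \<otimes>\<^bsub>G\<^esub> k \<otimes>\<^bsub>G\<^esub> inv\<^bsub>G\<^esub> g \<otimes>\<^bsub>G\<^esub> inv\<^bsub>G\<^esub> k | g k.
         g \<in> carrier G \<and> k \<in> kernel G H \<phi>}"

lemma tG: "h \<in> carrier H \<Longrightarrow> t h \<in> carrier G" using sec by auto
lemma phit: "h \<in> carrier H \<Longrightarrow> \<phi> (t h) = h" using sec by auto

lemma C_K: "C \<subseteq> K"
proof
  fix x assume "x \<in> C"
  then obtain g k where x: "x = g \<otimes>\<^bsub>G\<^esub> k \<otimes>\<^bsub>G\<^esub> inv\<^bsub>G\<^esub> g \<otimes>\<^bsub>G\<^esub> inv\<^bsub>G\<^esub> k"
    and g: "g \<in> carrier G" and k: "k \<in> K" by blast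
  have kc: "k \<in> carrier G" "\<phi> k = \<one>\<^bsub>H\<^esub>" using k by (auto simp: kernel_def)
  have "\<phi> x = \<one>\<^bsub>H\<^esub>" using g kc by (simp add: x)
  thus "x \<in> K" using g kc by (simp add: x kernel_def)
qed

lemma Gamma_normal: "\<Gamma> \<lhd> G"
proof -
  let ?F = "{N. N \<lhd> G \<and> C \<subseteq> N}"
  have Gam: "\<Gamma> = \<Inter>?F" unfolding Gamma_def by simp
  have ne: "carrier G \<in> ?F"
    using group.normal_self[OF grpG] by (auto dest!: C_K[THEN subsetD] simp: kernel_def)
  have sg: "subgroup (\<Inter>?F) G"
    by (rule group.subgroups_Inter[OF grpG]) (use ne in \<open>auto dest: normal_imp_subgroup\<close>)
  have "\<forall>x\<in>carrier G. \<forall>h\<in>\<Inter>?F. x \<otimes>\<^bsub>G\<^esub> h \<otimes>\<^bsub>G\<^esub> inv\<^bsub>G\<^esub> x \<in> \<Inter>?F"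
    using group.normal_inv_iff[OF grpG] by blast
  thus ?thesis unfolding Gam using group.normal_inv_iff[OF grpG] sg by blast
qed

lemma C_Gamma: "C \<subseteq> \<Gamma>" unfolding Gamma_def by blast

lemma Gamma_K: "\<Gamma> \<subseteq> K"
  unfolding Gamma_def using gh.normal_kernel C_K by blast

sublocale nm: normal \<Gamma> G by (rule Gamma_normal)

sublocale Qg: group Q by (rule nm.factorgroup_is_group)

sublocale qh: group_hom G Q \<pi>
  using grpG nm.r_coset_hom_Mod by (simp add: group_hom_def group_hom_axioms_def Qg.group_axioms)

lemma carrQ: "carrier Q = \<pi> ` carrier G" by (simp add: carrier_FactGroup)

lemma carrA: "carrier A = \<pi> ` K" by (simp add: KmodGamma_def)

lemma A_eq: "A = Q\<lparr>carrier := \<pi> ` K\<rparr>" by (simp add: KmodGamma_def)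

lemma KG: "K \<subseteq> carrier G" by (auto simp: kernel_def)

lemma subA: "subgroup (\<pi> ` K) Q"
  by (rule qh.subgroup_img_is_subgroup[OF gh.subgroup_kernel])

lemma coset_eq: assumes "a \<in> carrier G" "b \<in> carrier G" "a \<otimes>\<^bsub>G\<^esub> inv\<^bsub>G\<^esub> b \<in> \<Gamma>"
  shows "\<pi> a = \<pi> b"
proof -
  have sg: "subgroup \<Gamma> G" by (rule nm.subgroup_axioms)
  have "\<pi> a = \<pi> ((a \<otimes>\<^bsub>G\<^esub> inv\<^bsub>G\<^esub> b) \<otimes>\<^bsub>G\<^esub> b)"
    using assms grpG by (simp add: gh.G.m_assoc)
  also have "\<dots> = (\<Gamma> #>\<^bsub>G\<^esub> (a \<otimes>\<^bsub>G\<^esub> inv\<^bsub>G\<^esub> b)) #>\<^bsub>G\<^esub> b"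
    using assms sg by (intro gh.G.coset_mult_assoc[symmetric]) (auto simp: subgroup.subset)
  also have "\<dots> = \<pi> b"
  proof -
    have "\<Gamma> #>\<^bsub>G\<^esub> (a \<otimes>\<^bsub>G\<^esub> inv\<^bsub>G\<^esub> b) = \<Gamma>"
      by (rule gh.G.coset_join2) (use assms sg in auto)
    thus ?thesis by (simp only:)
  qed
  finally show ?thesis .
qed

lemma central0: assumes "g \<in> carrier G" "k \<in> K" shows "\<pi> (g \<otimes>\<^bsub>G\<^esub> k) = \<pi> (k \<otimes>\<^bsub>G\<^esub> g)"
proof -
  have k: "k \<in> carrier G" using assms KG by auto
  have "(g \<otimes>\<^bsub>G\<^esub> k) \<otimes>\<^bsub>G\<^esub> inv\<^bsub>G\<^esub> (k \<otimes>\<^bsub>G\<^esub> g) = g \<otimes>\<^bsub>G\<^esub> k \<otimes>\<^bsub>G\<^esub> inv\<^bsub>G\<^esub> g \<otimes>\<^bsub>G\<^esub> inv\<^bsub>G\<^esub> k"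
    using assms k grpG by (simp add: gh.G.inv_mult_group gh.G.m_assoc)
  also have "\<dots> \<in> \<Gamma>" using C_Gamma assms by blast
  finally have "(g \<otimes>\<^bsub>G\<^esub> k) \<otimes>\<^bsub>G\<^esub> inv\<^bsub>G\<^esub> (k \<otimes>\<^bsub>G\<^esub> g) \<in> \<Gamma>" .
  thus ?thesis using assms k by (intro coset_eq) auto
qed

lemma central: assumes "z \<in> carrier A" "q \<in> carrier Q" shows "z \<otimes>\<^bsub>Q\<^esub> q = q \<otimes>\<^bsub>Q\<^esub> z"
proof -
  obtain k where k: "k \<in> K" "z = \<pi> k" using assms carrA by auto
  obtain g where g: "g \<in> carrier G" "q = \<pi> g" using assms carrQ by auto
  have kc: "k \<in> carrier G" using k KG by auto
  have "z \<otimes>\<^bsub>Q\<^esub> q = \<pi> (k \<otimes>\<^bsub>G\<^esub> g)" using k g kc by simp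
  also have "\<dots> = \<pi> (g \<otimes>\<^bsub>G\<^esub> k)" using central0[OF g(1) k(1)] by simp
  also have "\<dots> = q \<otimes>\<^bsub>Q\<^esub> z" using k g kc by simp
  finally show ?thesis .
qed

lemma AQ_mult: "x \<otimes>\<^bsub>A\<^esub> y = x \<otimes>\<^bsub>Q\<^esub> y" by (simp add: A_eq)
lemma AQ_one: "\<one>\<^bsub>A\<^esub> = \<Gamma>" by (simp add: A_eq)
lemma AQ_inv: "x \<in> carrier A \<Longrightarrow> inv\<^bsub>A\<^esub> x = inv\<^bsub>Q\<^esub> x"
  using A_eq subA by (simp add: Qg.m_inv_consistent)

lemma grpA: "comm_group A"
proof -
  have "group A" unfolding A_eq by (rule Qg.subgroup_imp_group[OF subA])
  moreover have "x \<otimes>\<^bsub>A\<^esub> y = y \<otimes>\<^bsub>A\<^esub> x" if "x \<in> carrier A" "y \<in> carrier A" for x y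
  proof -
    have "y \<in> carrier Q" using subsetD[OF subgroup.subset[OF subA]] that(2) unfolding carrA by this
    thus ?thesis unfolding AQ_mult by (rule central[OF that(1)])
  qed
  ultimately show ?thesis by (rule group.group_comm_groupI)
qed


abbreviation "\<kappa> \<equiv> kap G H \<phi> t"
abbreviation "\<beta> \<equiv> bet G H \<phi> t"

lemma one_K: "\<one>\<^bsub>G\<^esub> \<in> K" by (simp add: kernel_def)
lemma Gam_A: "\<Gamma> \<in> carrier A"
proof -
  have "\<pi> \<one>\<^bsub>G\<^esub> = \<Gamma>" by (rule gh.G.coset_mult_one[OF nm.subset])
  thus ?thesis unfolding carrA using one_K by (metis image_eqI)
qed

lemma sK: "g \<in> carrier G \<Longrightarrow> g \<otimes>\<^bsub>G\<^esub> inv\<^bsub>G\<^esub> t (\<phi> g) \<in> K"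
  using tG phit by (simp add: kernel_def)

lemma bK: "h1 \<in> carrier H \<Longrightarrow> h2 \<in> carrier H \<Longrightarrow>
   t h1 \<otimes>\<^bsub>G\<^esub> t h2 \<otimes>\<^bsub>G\<^esub> inv\<^bsub>G\<^esub> t (h1 \<otimes>\<^bsub>H\<^esub> h2) \<in> K"
  using tG phit by (simp add: kernel_def)

lemma kap_A: "\<kappa> l \<in> carrier A"
  using Gam_A sK carrA by (auto simp: kap_def)

lemma bet_A: "\<beta> l \<in> carrier A"
proof (cases "length l = 2 \<and> set l \<subseteq> carrier H")
  case True
  then obtain h1 h2 where l: "l = [h1, h2]" by (cases l rule: list.exhaust; cases "tl l") auto
  show ?thesis using True bK carrA by (auto simp: bet_def l)
qed (use Gam_A in \<open>auto simp: bet_def\<close>)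

lemma kap_Q: "g \<in> carrier G \<Longrightarrow> \<kappa> [g] = \<pi> g \<otimes>\<^bsub>Q\<^esub> inv\<^bsub>Q\<^esub> \<pi> (t (\<phi> g))"
  using tG by (simp add: kap_def)

lemma bet_Q: "h1 \<in> carrier H \<Longrightarrow> h2 \<in> carrier H \<Longrightarrow>
   \<beta> [h1, h2] = \<pi> (t h1) \<otimes>\<^bsub>Q\<^esub> \<pi> (t h2) \<otimes>\<^bsub>Q\<^esub> inv\<^bsub>Q\<^esub> \<pi> (t (h1 \<otimes>\<^bsub>H\<^esub> h2))"
  using tG by (simp add: bet_def)

lemma AQc: "x \<in> carrier A \<Longrightarrow> x \<in> carrier Q"
  using subsetD[OF subgroup.subset[OF subA]] unfolding carrA by this

lemma kap_mult: assumes "g1 \<in> carrier G" "g2 \<in> carrier G"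
  shows "\<kappa> [g1] \<otimes>\<^bsub>A\<^esub> \<kappa> [g2] \<otimes>\<^bsub>A\<^esub> \<beta> [\<phi> g1, \<phi> g2] = \<kappa> [g1 \<otimes>\<^bsub>G\<^esub> g2]"
proof -
  have h: "\<phi> g1 \<in> carrier H" "\<phi> g2 \<in> carrier H" using assms by auto
  have cen: "\<kappa> [g2] \<otimes>\<^bsub>Q\<^esub> \<pi> (t (\<phi> g1)) = \<pi> (t (\<phi> g1)) \<otimes>\<^bsub>Q\<^esub> \<kappa> [g2]"
    using central[OF kap_A] h tG by simp
  show ?thesis unfolding AQ_mult
    using Qg.aux_kap[of "\<pi> g1" "\<pi> (t (\<phi> g1))" "\<pi> g2" "\<pi> (t (\<phi> g2))" "\<pi> (t (\<phi> g1 \<otimes>\<^bsub>H\<^esub> \<phi> g2))"]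
      cen assms h tG by (simp add: kap_Q bet_Q)
qed

lemma bet_coc: assumes "h1 \<in> carrier H" "h2 \<in> carrier H" "h3 \<in> carrier H"
  shows "\<beta> [h1, h2] \<otimes>\<^bsub>A\<^esub> \<beta> [h1 \<otimes>\<^bsub>H\<^esub> h2, h3] = \<beta> [h2, h3] \<otimes>\<^bsub>A\<^esub> \<beta> [h1, h2 \<otimes>\<^bsub>H\<^esub> h3]"
proof -
  have cen: "\<beta> [h2, h3] \<otimes>\<^bsub>Q\<^esub> \<pi> (t h1) = \<pi> (t h1) \<otimes>\<^bsub>Q\<^esub> \<beta> [h2, h3]"
    using central[OF bet_A] assms tG by simp
  show ?thesis unfolding AQ_mult
    using Qg.aux_coc[of "\<pi> (t h1)" "\<pi> (t h2)" "\<pi> (t h3)" "\<pi> (t (h1 \<otimes>\<^bsub>H\<^esub> h2))" "\<pi> (t (h2 \<otimes>\<^bsub>H\<^esub> h3))"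
       "\<pi> (t (h1 \<otimes>\<^bsub>H\<^esub> h2 \<otimes>\<^bsub>H\<^esub> h3))"]
      cen assms tG by (simp add: bet_Q gh.H.m_assoc)
qed

lemma psi_term: assumes "a \<in> carrier G" "b \<in> carrier G" "\<phi> a = \<phi> b"
  shows "\<pi> (a \<otimes>\<^bsub>G\<^esub> inv\<^bsub>G\<^esub> b) = \<kappa> [a] \<otimes>\<^bsub>A\<^esub> inv\<^bsub>A\<^esub> \<kappa> [b]"
proof -
  interpret Ac: comm_group A by (rule grpA)
  have abK: "a \<otimes>\<^bsub>G\<^esub> inv\<^bsub>G\<^esub> b \<in> K" using assms by (simp add: kernel_def)
  hence abA: "\<pi> (a \<otimes>\<^bsub>G\<^esub> inv\<^bsub>G\<^esub> b) \<in> carrier A" using carrA by auto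
  have "\<pi> (a \<otimes>\<^bsub>G\<^esub> inv\<^bsub>G\<^esub> b) \<otimes>\<^bsub>A\<^esub> \<kappa> [b] = \<kappa> [a]"
    unfolding AQ_mult using Qg.aux_psi[of "\<pi> a" "\<pi> b" "\<pi> (t (\<phi> b))"] assms tG
    by (simp add: kap_Q)
  thus ?thesis using abA kap_A by (metis Ac.inv_solve_right)
qed

end


context comm_group begin

lemma E1: assumes c: "x \<in> carrier G" "y \<in> carrier G" "z \<in> carrier G" and hyp: "x \<otimes> y \<otimes> z = u"
  shows "y [^] (n::int) \<otimes> (u [^] (- n) \<otimes> x [^] n) = z [^] (- n)"
proof -
  have u: "u [^] (- n) = inv (x [^] n) \<otimes> inv (y [^] n) \<otimes> inv (z [^] n)"
    using c by (simp add: hyp[symmetric] int_pow_neg int_pow_distrib inv_mult)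
  have "y [^] n \<otimes> (u [^] (- n) \<otimes> x [^] n)
      = (y [^] n \<otimes> inv (y [^] n)) \<otimes> ((x [^] n \<otimes> inv (x [^] n)) \<otimes> inv (z [^] n))"
    unfolding u using c by (simp only: m_ac int_pow_closed inv_closed m_closed)
  also have "\<dots> = z [^] (- n)" using c by (simp add: int_pow_neg)
  finally show ?thesis .
qed

lemma E2: assumes c: "x \<in> carrier G" "y \<in> carrier G" "z \<in> carrier G" "v \<in> carrier G"
    and hyp: "x \<otimes> y = z \<otimes> v"
  shows "z [^] (n::int) \<otimes> (y [^] (- n) \<otimes> (v [^] n \<otimes> x [^] (- n))) = \<one>"
proof -
  have h2: "x [^] n \<otimes> y [^] n = z [^] n \<otimes> v [^] n"
  proof -
    have "(x \<otimes> y) [^] n = (z \<otimes> v) [^] n" using hyp by simp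
    thus ?thesis using c by (simp add: int_pow_distrib)
  qed
  have "z [^] n \<otimes> (y [^] (- n) \<otimes> (v [^] n \<otimes> x [^] (- n)))
      = (z [^] n \<otimes> v [^] n) \<otimes> inv (x [^] n \<otimes> y [^] n)"
    using c by (simp only: m_ac int_pow_neg inv_mult int_pow_closed inv_closed m_closed)
  also have "\<dots> = \<one>" unfolding h2 using c by simp
  finally show ?thesis .
qed

lemma Lin_delta': assumes "f \<in> UNIV \<rightarrow> carrier G" "finite S" "a \<in> S"
  shows "Lin G f (\<lambda>l. if a = l then k else 0) S = f a [^] (k::int)"
  using Lin_delta[OF assms, of k] by (simp add: eq_commute)

end

lemma sum_face: assumes "length l = k" "k \<ge> 1"
  shows "(\<Sum>i\<in>{i. 1 \<le> length l \<and> i \<le> length l \<and> face M i l = m}. f i)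
       = (\<Sum>i\<in>{0..k}. if face M i l = m then f i else 0)"
proof -
  have "{i. 1 \<le> length l \<and> i \<le> length l \<and> face M i l = m} = {i\<in>{0..k}. face M i l = m}"
    using assms by auto
  thus ?thesis by (simp only: sum.inter_filter[OF finite_atLeastAtMost])
qed

lemma sum_face2: assumes "l = [a, b]"
  shows "(\<Sum>i\<in>{i. 1 \<le> length l \<and> i \<le> length l \<and> face M i l = m}. f i)
       = (if [b] = m then f 0 else 0) + ((if [a \<otimes>\<^bsub>M\<^esub> b] = m then f 1 else 0) + (if [a] = m then f 2 else 0))"
proof -
  have "(\<Sum>i\<in>{i. 1 \<le> length l \<and> i \<le> length l \<and> face M i l = m}. f i)
       = (\<Sum>i\<in>{0..2}. if face M i l = m then f i else 0)"
    using sum_face[of l 2] assms by simp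
  also have "{0..2::nat} = {0, 1, 2}" by auto
  finally show ?thesis using assms by (simp add: face_def)
qed

lemma sum_face3: assumes "l = [a, b, c]"
  shows "(\<Sum>i\<in>{i. 1 \<le> length l \<and> i \<le> length l \<and> face M i l = m}. f i)
       = (if [b, c] = m then f 0 else 0) + ((if [a \<otimes>\<^bsub>M\<^esub> b, c] = m then f 1 else 0) +
          ((if [a, b \<otimes>\<^bsub>M\<^esub> c] = m then f 2 else 0) + (if [a, b] = m then f 3 else 0)))"
proof -
  have "(\<Sum>i\<in>{i. 1 \<le> length l \<and> i \<le> length l \<and> face M i l = m}. f i)
       = (\<Sum>i\<in>{0..3}. if face M i l = m then f i else 0)"
    using sum_face[of l 3] assms by simp
  also have "{0..3::nat} = {0, 1, 2, 3}" by auto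
  finally show ?thesis using assms by (simp add: face_def)
qed


lemma list1: "w \<in> coker_chains M \<phi> 1 \<Longrightarrow> p \<in> supp w \<Longrightarrow>
  \<exists>a b. fst p = [a] \<and> snd p = [b] \<and> a \<in> carrier M \<and> b \<in> carrier M \<and> \<phi> a = \<phi> b"
  unfolding coker_chains_def
  apply (cases "fst p" rule: list.exhaust; cases "snd p" rule: list.exhaust)
  by auto

lemma list2: "w \<in> chains M 2 \<Longrightarrow> l \<in> supp w \<Longrightarrow> \<exists>a b. l = [a, b] \<and> a \<in> carrier M \<and> b \<in> carrier M"
  unfolding chains_def
  apply (cases l rule: list.exhaust; cases "tl l" rule: list.exhaust)
  by auto

lemma list3: "w \<in> chains M 3 \<Longrightarrow> l \<in> supp w \<Longrightarrow> \<exists>a b c. l = [a, b, c] \<and> a \<in> carrier M \<and> b \<in> carrier M \<and> c \<in> carrier M"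
  unfolding chains_def
  apply (cases l rule: list.exhaust; cases "tl l" rule: list.exhaust; cases "tl (tl l)" rule: list.exhaust)
  by auto

lemma chains_fin: "w \<in> chains M k \<Longrightarrow> finite (supp w)" by (simp add: chains_def)

context fsetup begin

lemma kapF: "\<kappa> \<in> UNIV \<rightarrow> carrier A" using kap_A by auto
lemma betF: "\<beta> \<in> UNIV \<rightarrow> carrier A" using bet_A by auto

lemma bdG_Lin:
  assumes w: "w \<in> chains G 2" and T: "finite T" and fT: "\<And>l i. l \<in> supp w \<Longrightarrow> i \<le> 2 \<Longrightarrow> face G i l \<in> T"
  shows "Lin A \<kappa> (bd G w) T = finprod A (\<lambda>l. \<beta> (map \<phi> l) [^]\<^bsub>A\<^esub> (- w l)) (supp w)"
proof -
  interpret Ac: comm_group A by (rule grpA)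
  have "Lin A \<kappa> (bd G w) T = finprod A (\<lambda>l. Lin A \<kappa> (\<lambda>m. \<Sum>i\<in>{i. 1 \<le> length l \<and> i \<le> length l \<and> face G i l = m}.
                 (-1) ^ i * w l) T) (supp w)"
    unfolding bd_def by (rule Ac.Lin_sum[OF kapF chains_fin[OF w]])
  also have "\<dots> = finprod A (\<lambda>l. \<beta> (map \<phi> l) [^]\<^bsub>A\<^esub> (- w l)) (supp w)"
  proof (rule Ac.finprod_cong')
    show "(\<lambda>l. \<beta> (map \<phi> l) [^]\<^bsub>A\<^esub> (- w l)) \<in> supp w \<rightarrow> carrier A" using bet_A by auto
  next
    fix l assume l: "l \<in> supp w"
    obtain a b where ab: "l = [a, b]" "a \<in> carrier G" "b \<in> carrier G" using list2[OF w l] by blast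
    have f: "[b] \<in> T" "[a \<otimes>\<^bsub>G\<^esub> b] \<in> T" "[a] \<in> T"
      using fT[OF l, of 0] fT[OF l, of 1] fT[OF l, of 2] by (simp_all add: ab face_def)
    have "Lin A \<kappa> (\<lambda>m. \<Sum>i\<in>{i. 1 \<le> length l \<and> i \<le> length l \<and> face G i l = m}. (-1) ^ i * w l) T
       = Lin A \<kappa> (\<lambda>m. (if [b] = m then w l else 0) + ((if [a \<otimes>\<^bsub>G\<^esub> b] = m then - w l else 0) + (if [a] = m then w l else 0))) T"
    proof (rule arg_cong[where f="\<lambda>u. Lin A \<kappa> u T"], rule ext)
      fix m show "(\<Sum>i\<in>{i. 1 \<le> length l \<and> i \<le> length l \<and> face G i l = m}. (-1) ^ i * w l) =
        (if [b] = m then w l else 0) + ((if [a \<otimes>\<^bsub>G\<^esub> b] = m then - w l else 0) + (if [a] = m then w l else 0))"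
        using sum_face2[OF ab(1), where M=G and m=m and f="\<lambda>i. (-1) ^ i * w l"] by simp
    qed
    also have "\<dots> = \<kappa> [b] [^]\<^bsub>A\<^esub> w l \<otimes>\<^bsub>A\<^esub> (\<kappa> [a \<otimes>\<^bsub>G\<^esub> b] [^]\<^bsub>A\<^esub> (- w l) \<otimes>\<^bsub>A\<^esub> \<kappa> [a] [^]\<^bsub>A\<^esub> w l)"
      using f T by (simp add: Ac.Lin_add[OF kapF] Ac.Lin_delta'[OF kapF])
    also have "\<dots> = \<beta> [\<phi> a, \<phi> b] [^]\<^bsub>A\<^esub> (- w l)"
      by (rule Ac.E1[OF kap_A kap_A bet_A kap_mult[OF ab(2,3)]])
    finally show "Lin A \<kappa> (\<lambda>m. \<Sum>i\<in>{i. 1 \<le> length l \<and> i \<le> length l \<and> face G i l = m}. (-1) ^ i * w l) T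
       = \<beta> (map \<phi> l) [^]\<^bsub>A\<^esub> (- w l)" by (simp add: ab)
  qed simp
  finally show ?thesis .
qed

lemma bdH_Lin:
  assumes w: "w \<in> chains H 3" and T: "finite T" and fT: "\<And>l i. l \<in> supp w \<Longrightarrow> i \<le> 3 \<Longrightarrow> face H i l \<in> T"
  shows "Lin A \<beta> (bd H w) T = \<one>\<^bsub>A\<^esub>"
proof -
  interpret Ac: comm_group A by (rule grpA)
  have "Lin A \<beta> (bd H w) T = finprod A (\<lambda>l. Lin A \<beta> (\<lambda>m. \<Sum>i\<in>{i. 1 \<le> length l \<and> i \<le> length l \<and> face H i l = m}.
                 (-1) ^ i * w l) T) (supp w)"
    unfolding bd_def by (rule Ac.Lin_sum[OF betF chains_fin[OF w]])
  also have "\<dots> = \<one>\<^bsub>A\<^esub>"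
  proof (rule Ac.finprod_one_eqI)
    fix l assume l: "l \<in> supp w"
    obtain a b c where ab: "l = [a, b, c]" "a \<in> carrier H" "b \<in> carrier H" "c \<in> carrier H"
      using list3[OF w l] by blast
    have f: "[b, c] \<in> T" "[a \<otimes>\<^bsub>H\<^esub> b, c] \<in> T" "[a, b \<otimes>\<^bsub>H\<^esub> c] \<in> T" "[a, b] \<in> T"
      using fT[OF l, of 0] fT[OF l, of 1] fT[OF l, of 2] fT[OF l, of 3] by (simp_all add: ab face_def)
    have "Lin A \<beta> (\<lambda>m. \<Sum>i\<in>{i. 1 \<le> length l \<and> i \<le> length l \<and> face H i l = m}. (-1) ^ i * w l) T
       = Lin A \<beta> (\<lambda>m. (if [b, c] = m then w l else 0) + ((if [a \<otimes>\<^bsub>H\<^esub> b, c] = m then - w l else 0) +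
          ((if [a, b \<otimes>\<^bsub>H\<^esub> c] = m then w l else 0) + (if [a, b] = m then - w l else 0)))) T"
    proof (rule arg_cong[where f="\<lambda>u. Lin A \<beta> u T"], rule ext)
      fix m show "(\<Sum>i\<in>{i. 1 \<le> length l \<and> i \<le> length l \<and> face H i l = m}. (-1) ^ i * w l) =
        (if [b, c] = m then w l else 0) + ((if [a \<otimes>\<^bsub>H\<^esub> b, c] = m then - w l else 0) +
          ((if [a, b \<otimes>\<^bsub>H\<^esub> c] = m then w l else 0) + (if [a, b] = m then - w l else 0)))"
        using sum_face3[OF ab(1), where M=H and m=m and f="\<lambda>i. (-1) ^ i * w l"] by simp
    qed
    also have "\<dots> = \<beta> [b, c] [^]\<^bsub>A\<^esub> w l \<otimes>\<^bsub>A\<^esub> (\<beta> [a \<otimes>\<^bsub>H\<^esub> b, c] [^]\<^bsub>A\<^esub> (- w l) \<otimes>\<^bsub>A\<^esub>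
         (\<beta> [a, b \<otimes>\<^bsub>H\<^esub> c] [^]\<^bsub>A\<^esub> w l \<otimes>\<^bsub>A\<^esub> \<beta> [a, b] [^]\<^bsub>A\<^esub> (- w l)))"
      using f T by (simp add: Ac.Lin_add[OF betF] Ac.Lin_delta'[OF betF])
    also have "\<dots> = \<one>\<^bsub>A\<^esub>"
      by (rule Ac.E2[OF bet_A bet_A bet_A bet_A bet_coc[OF ab(2,3,4)]])
    finally show "Lin A \<beta> (\<lambda>m. \<Sum>i\<in>{i. 1 \<le> length l \<and> i \<le> length l \<and> face H i l = m}. (-1) ^ i * w l) T = \<one>\<^bsub>A\<^esub>" .
  qed
  finally show ?thesis .
qed

lemma push_Lin:
  assumes fin: "finite (supp u)" and f: "f \<in> UNIV \<rightarrow> carrier A" and T: "finite T" and gT: "g ` supp u \<subseteq> T"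
  shows "Lin A f (push g u) T = finprod A (\<lambda>l. f (g l) [^]\<^bsub>A\<^esub> u l) (supp u)"
proof -
  interpret Ac: comm_group A by (rule grpA)
  have "push g u = (\<lambda>m. \<Sum>l\<in>supp u. if g l = m then u l else 0)"
    unfolding push_def using fin by (simp add: sum.inter_filter)
  hence "Lin A f (push g u) T = finprod A (\<lambda>l. Lin A f (\<lambda>m. if g l = m then u l else 0) T) (supp u)"
    using Ac.Lin_sum[OF f fin] by simp
  also have "\<dots> = finprod A (\<lambda>l. f (g l) [^]\<^bsub>A\<^esub> u l) (supp u)"
    using gT T f by (intro Ac.finprod_cong') (auto simp: Ac.Lin_delta' Pi_iff)
  finally show ?thesis .
qed

lemma zchain_Lin:
  assumes T: "finite T" and zT: "\<forall>i\<in>{1..2*n}. [xs i, ys i] \<in> T"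
  shows "Lin A \<beta> (zchain n xs ys) T = finprod A (\<lambda>i. \<beta> [xs i, ys i] [^]\<^bsub>A\<^esub> ((-1::int) ^ i)) {1..2*n}"
proof -
  interpret Ac: comm_group A by (rule grpA)
  have "Lin A \<beta> (zchain n xs ys) T = finprod A (\<lambda>i. Lin A \<beta> (\<lambda>l. if l = [xs i, ys i] then (-1) ^ i else 0) T) {1..2*n}"
    unfolding zchain_def by (rule Ac.Lin_sum[OF betF]) simp
  also have "\<dots> = finprod A (\<lambda>i. \<beta> [xs i, ys i] [^]\<^bsub>A\<^esub> ((-1::int) ^ i)) {1..2*n}"
    using zT T bet_A by (intro Ac.finprod_cong') (auto simp: Ac.Lin_delta[OF betF])
  finally show ?thesis .
qed

lemma psi_Lin:
  assumes c: "c \<in> coker_chains G \<phi> 1" and T: "finite T" and cT: "fst ` supp c \<subseteq> T" "snd ` supp c \<subseteq> T"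
  shows "psi G H \<phi> c = Lin A \<kappa> (eps c) T"
proof -
  interpret Ac: comm_group A by (rule grpA)
  have fin: "finite (supp c)" using c by (simp add: coker_chains_def)
  have "Lin A \<kappa> (eps c) T = finprod A (\<lambda>p. Lin A \<kappa> (\<lambda>l. (if fst p = l then c p else 0) - (if snd p = l then c p else 0)) T) (supp c)"
    unfolding eps_def by (rule Ac.Lin_sum[OF kapF fin])
  also have "\<dots> = psi G H \<phi> c"
    unfolding psi_def
  proof (rule Ac.finprod_cong'[symmetric])
    show "(\<lambda>p. Lin A \<kappa> (\<lambda>l. (if fst p = l then c p else 0) - (if snd p = l then c p else 0)) T) \<in> supp c \<rightarrow> carrier A"
      using Ac.Lin_closed[OF kapF] by auto
  next
    fix p assume p: "p \<in> supp c"
    obtain a b where ab: "fst p = [a]" "snd p = [b]" "a \<in> carrier G" "b \<in> carrier G" "\<phi> a = \<phi> b"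
      using list1[OF c p] by blast
    have inT: "fst p \<in> T" "snd p \<in> T" using cT p by auto
    have "Lin A \<kappa> (\<lambda>l. (if fst p = l then c p else 0) - (if snd p = l then c p else 0)) T
       = Lin A \<kappa> (\<lambda>l. (if fst p = l then c p else 0) + (if snd p = l then - c p else 0)) T"
      by (intro arg_cong[where f="\<lambda>u. Lin A \<kappa> u T"] ext) simp
    also have "\<dots> = \<kappa> [a] [^]\<^bsub>A\<^esub> c p \<otimes>\<^bsub>A\<^esub> \<kappa> [b] [^]\<^bsub>A\<^esub> (- c p)"
      using inT T ab by (simp add: Ac.Lin_add[OF kapF] Ac.Lin_delta'[OF kapF])
    also have "\<dots> = (\<kappa> [a] \<otimes>\<^bsub>A\<^esub> inv\<^bsub>A\<^esub> \<kappa> [b]) [^]\<^bsub>A\<^esub> c p"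
      using kap_A by (simp add: Ac.int_pow_distrib Ac.int_pow_inv Ac.int_pow_neg)
    also have "\<dots> = (\<Gamma> #>\<^bsub>G\<^esub> (hd (fst p) \<otimes>\<^bsub>G\<^esub> inv\<^bsub>G\<^esub> hd (snd p))) [^]\<^bsub>A\<^esub> c p"
      using psi_term[OF ab(3,4,5)] ab by simp
    finally show "(\<Gamma> #>\<^bsub>G\<^esub> (hd (fst p) \<otimes>\<^bsub>G\<^esub> inv\<^bsub>G\<^esub> hd (snd p))) [^]\<^bsub>A\<^esub> c p =
       Lin A \<kappa> (\<lambda>l. (if fst p = l then c p else 0) - (if snd p = l then c p else 0)) T" by (rule sym)
  qed (rule refl)
  finally show ?thesis by simp
qed


lemma supp_neg: "supp (\<lambda>l. - w l) = supp w" by (simp add: supp_def)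

lemma push_neg: "push g (\<lambda>l. - w l) = (\<lambda>m. - push g w m)"
  unfolding push_def supp_neg by (simp add: sum_negf)

lemma bdG_push:
  assumes w: "w \<in> chains G 2" and T: "finite T" and fT: "\<And>l i. l \<in> supp w \<Longrightarrow> i \<le> 2 \<Longrightarrow> face G i l \<in> T"
    and T': "finite T'" and wT': "map \<phi> ` supp w \<subseteq> T'"
  shows "inv\<^bsub>A\<^esub> (Lin A \<kappa> (bd G w) T) = Lin A \<beta> (push (map \<phi>) w) T'"
proof -
  interpret Ac: comm_group A by (rule grpA)
  have fin: "finite (supp (\<lambda>l. - w l))" unfolding supp_neg by (rule chains_fin[OF w])
  have "Lin A \<kappa> (bd G w) T = finprod A (\<lambda>l. \<beta> (map \<phi> l) [^]\<^bsub>A\<^esub> (- w l)) (supp w)"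
    by (rule bdG_Lin[OF w T fT])
  also have "\<dots> = Lin A \<beta> (push (map \<phi>) (\<lambda>l. - w l)) T'"
    using push_Lin[OF fin betF T', of "map \<phi>", unfolded supp_neg, OF wT'] by simp
  also have "\<dots> = inv\<^bsub>A\<^esub> (Lin A \<beta> (push (map \<phi>) w) T')"
    unfolding push_neg by (rule Ac.Lin_neg[OF betF])
  finally show ?thesis using Ac.Lin_closed[OF betF] by simp
qed

end

context monoid begin
lemma ordprod_closed: "set xs \<subseteq> carrier G \<Longrightarrow> ordprod G xs \<in> carrier G"
  by (induction xs) (auto simp: ordprod_def)
lemma ordprod_append: "set xs \<subseteq> carrier G \<Longrightarrow> set ys \<subseteq> carrier G \<Longrightarrow> ordprod G (xs @ ys) = ordprod G xs \<otimes> ordprod G ys"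
proof (induction xs)
  case Nil thus ?case by (simp add: ordprod_def ordprod_closed[unfolded ordprod_def])
next
  case (Cons x xs) thus ?case
    using ordprod_closed[of xs] ordprod_closed[of ys] by (simp add: ordprod_def m_assoc)
qed
lemma ordprod_single: "x \<in> carrier G \<Longrightarrow> ordprod G [x] = x" by (simp add: ordprod_def)
end

lemma neg1_even: "(-1::int) ^ (2 * k) = 1" by (simp add: power_mult)
lemma neg1_odd: "(-1::int) ^ (Suc (2 * k)) = -1" by (simp add: power_mult)

context fsetup begin

lemma ordprod_fin: assumes "\<forall>k\<in>{1..m}. f k \<in> carrier A"
  shows "ordprod Q (map f [1..<m+1]) = finprod A f {1..m}"
  using assms
proof (induction m)
  case 0
  interpret Ac: comm_group A by (rule grpA)
  show ?case by (simp add: ordprod_def AQ_one)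
next
  case (Suc m)
  interpret Ac: comm_group A by (rule grpA)
  have fc: "f (Suc m) \<in> carrier A" "\<forall>k\<in>{1..m}. f k \<in> carrier A" using Suc.prems by auto
  have sQ: "set (map f [1..<m+1]) \<subseteq> carrier Q" using fc(2) AQc by auto
  have "ordprod Q (map f [1..<Suc m + 1]) = ordprod Q (map f [1..<m+1] @ [f (Suc m)])" by simp
  also have "\<dots> = ordprod Q (map f [1..<m+1]) \<otimes>\<^bsub>Q\<^esub> f (Suc m)"
    using sQ AQc[OF fc(1)] by (simp add: Qg.ordprod_append Qg.ordprod_single)
  also have "\<dots> = finprod A f {1..m} \<otimes>\<^bsub>A\<^esub> f (Suc m)" using Suc.IH[OF fc(2)] by (simp add: AQ_mult)
  also have "\<dots> = finprod A f {1..Suc m}"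
  proof -
    have "{1..Suc m} = insert (Suc m) {1..m}" by auto
    thus ?thesis using fc by (simp add: Pi_iff Ac.m_comm)
  qed
  finally show ?case .
qed

lemma alt_prod: assumes "\<forall>i\<in>{1..2*n}. b i \<in> carrier A"
  shows "finprod A (\<lambda>i. b i [^]\<^bsub>A\<^esub> ((-1::int) ^ i)) {1..2*n}
       = finprod A (\<lambda>k. b (2*k)) {1..n} \<otimes>\<^bsub>A\<^esub> inv\<^bsub>A\<^esub> (finprod A (\<lambda>k. b (2*k - 1)) {1..n})"
  using assms
proof (induction n)
  case 0
  interpret Ac: comm_group A by (rule grpA)
  show ?case by simp
next
  case (Suc n)
  interpret Ac: comm_group A by (rule grpA)
  have bc: "\<forall>i\<in>{1..2*n}. b i \<in> carrier A" "b (Suc (2*n)) \<in> carrier A" "b (2 * Suc n) \<in> carrier A"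
    using Suc.prems by auto
  have s1: "{1..2 * Suc n} = insert (2 * Suc n) (insert (Suc (2*n)) {1..2*n})" by auto
  have s2: "{1..Suc n} = insert (Suc n) {1..n}" by auto
  have Pc: "finprod A (\<lambda>i. b i [^]\<^bsub>A\<^esub> ((-1::int) ^ i)) {1..2*n} \<in> carrier A" using bc by (auto simp: Pi_iff)
  have e1: "b (2*k) \<in> carrier A" if "k \<in> {1..n}" for k using that by (intro bc(1)[rule_format]) auto
  have e2: "b (2*k - 1) \<in> carrier A" if "k \<in> {1..n}" for k using that by (intro bc(1)[rule_format]) auto
  have e1': "b (2*k) \<in> carrier A" if "k \<in> {1..Suc n}" for k using that Suc.prems by (intro Suc.prems[rule_format]) auto
  have e2': "b (2*k - 1) \<in> carrier A" if "k \<in> {1..Suc n}" for k using that by (intro Suc.prems[rule_format]) auto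
  have Ec: "finprod A (\<lambda>k. b (2*k)) {1..n} \<in> carrier A" using e1 by (intro Ac.finprod_closed) auto
  have Oc: "finprod A (\<lambda>k. b (2*k - 1)) {1..n} \<in> carrier A" using e2 by (intro Ac.finprod_closed) auto
  have "finprod A (\<lambda>i. b i [^]\<^bsub>A\<^esub> ((-1::int) ^ i)) {1..2 * Suc n}
      = b (2 * Suc n) \<otimes>\<^bsub>A\<^esub> (inv\<^bsub>A\<^esub> b (Suc (2*n)) \<otimes>\<^bsub>A\<^esub> finprod A (\<lambda>i. b i [^]\<^bsub>A\<^esub> ((-1::int) ^ i)) {1..2*n})"
    unfolding s1 using bc by (simp add: Pi_iff neg1_even neg1_odd Ac.int_pow_neg del: power_Suc)
  also have "\<dots> = b (2 * Suc n) \<otimes>\<^bsub>A\<^esub> (inv\<^bsub>A\<^esub> b (Suc (2*n)) \<otimes>\<^bsub>A\<^esub>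
      (finprod A (\<lambda>k. b (2*k)) {1..n} \<otimes>\<^bsub>A\<^esub> inv\<^bsub>A\<^esub> (finprod A (\<lambda>k. b (2*k - 1)) {1..n})))"
    using Suc.IH[OF bc(1)] by simp
  also have "\<dots> = (b (2 * Suc n) \<otimes>\<^bsub>A\<^esub> finprod A (\<lambda>k. b (2*k)) {1..n}) \<otimes>\<^bsub>A\<^esub>
      (inv\<^bsub>A\<^esub> b (Suc (2*n)) \<otimes>\<^bsub>A\<^esub> inv\<^bsub>A\<^esub> (finprod A (\<lambda>k. b (2*k - 1)) {1..n}))"
    using bc Ec Oc by (simp only: Ac.m_ac Ac.inv_closed Ac.m_closed)
  also have "\<dots> = finprod A (\<lambda>k. b (2*k)) {1..Suc n} \<otimes>\<^bsub>A\<^esub> inv\<^bsub>A\<^esub> (finprod A (\<lambda>k. b (2*k - 1)) {1..Suc n})"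
  proof -
    have "finprod A (\<lambda>k. b (2*k)) {1..Suc n} = b (2 * Suc n) \<otimes>\<^bsub>A\<^esub> finprod A (\<lambda>k. b (2*k)) {1..n}"
      unfolding s2 using e1 e1' bc(3) by (subst Ac.finprod_insert) (auto simp: Pi_iff)
    moreover have "finprod A (\<lambda>k. b (2*k - 1)) {1..Suc n} = b (Suc (2 * n)) \<otimes>\<^bsub>A\<^esub> finprod A (\<lambda>k. b (2*k - 1)) {1..n}"
      unfolding s2 using e2 e2' bc(2) by (subst Ac.finprod_insert) (auto simp: Pi_iff)
    ultimately show ?thesis using bc Oc by (simp add: Ac.inv_mult)
  qed
  finally show ?case .
qed

lemma fphi_eq: assumes xy: "\<forall>i\<in>{1..2*n}. xs i \<in> carrier H \<and> ys i \<in> carrier H"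
  shows "finprod A (\<lambda>i. \<beta> [xs i, ys i] [^]\<^bsub>A\<^esub> ((-1::int) ^ i)) {1..2*n} = fphi G H \<phi> t n xs ys"
proof -
  interpret Ac: comm_group A by (rule grpA)
  let ?b = "\<lambda>i. \<beta> [xs i, ys i]"
  let ?e = "\<lambda>i. \<Gamma> #>\<^bsub>G\<^esub> (t (xs i) \<otimes>\<^bsub>G\<^esub> t (ys i) \<otimes>\<^bsub>G\<^esub> inv\<^bsub>G\<^esub> (t (xs i \<otimes>\<^bsub>H\<^esub> ys i)))"
  have be: "?e i = ?b i" if "i \<in> {1..2*n}" for i using xy that by (simp add: bet_def)
  have m1: "map (\<lambda>k. ?e (2 * k)) [1..<n + 1] = map (\<lambda>k. ?b (2 * k)) [1..<n + 1]"
    by (rule map_cong[OF refl]) (rule be, auto)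
  have m2: "map (\<lambda>k. ?e (2 * k - 1)) [1..<n + 1] = map (\<lambda>k. ?b (2 * k - 1)) [1..<n + 1]"
    by (rule map_cong[OF refl]) (rule be, auto)
  have fphi: "fphi G H \<phi> t n xs ys = ordprod Q (map (\<lambda>k. ?b (2 * k)) [1..<n + 1]) \<otimes>\<^bsub>Q\<^esub>
      inv\<^bsub>Q\<^esub> ordprod Q (map (\<lambda>k. ?b (2 * k - 1)) [1..<n + 1])"
    unfolding fphi_def Let_def m1[symmetric] m2[symmetric] by (rule refl)
  have Oc: "finprod A (\<lambda>k. ?b (2*k - 1)) {1..n} \<in> carrier A" using bet_A by (auto simp: Pi_iff)
  have o1: "ordprod Q (map (\<lambda>k. ?b (2 * k)) [1..<n + 1]) = finprod A (\<lambda>k. ?b (2 * k)) {1..n}"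
    by (rule ordprod_fin) (simp add: bet_A)
  have o2: "ordprod Q (map (\<lambda>k. ?b (2 * k - 1)) [1..<n + 1]) = finprod A (\<lambda>k. ?b (2 * k - 1)) {1..n}"
    by (rule ordprod_fin) (simp add: bet_A)
  show ?thesis unfolding fphi o1 o2 alt_prod[where b="?b" and n=n, OF ballI[OF bet_A]] AQ_mult AQ_inv[OF Oc]
    by (rule refl)
qed

end


theorem mainTheorem1:
  fixes G :: "'g monoid" and H :: "'h monoid" and \<phi> :: "'g \<Rightarrow> 'h"
    and t :: "'h \<Rightarrow> 'g" and n :: nat and xs ys :: "nat \<Rightarrow> 'h"
    and zt :: "'g list \<Rightarrow> int" and c :: "('g list \<times> 'g list) \<Rightarrow> int"
  assumes "group G" and "group H" and "\<phi> \<in> hom G H" and "\<phi> ` carrier G = carrier H"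
    and "\<forall>i\<in>{1..2*n}. xs i \<in> carrier H \<and> ys i \<in> carrier H"
    and "bd H (zchain n xs ys) = (\<lambda>_. 0)"
    and "\<forall>h\<in>carrier H. t h \<in> carrier G \<and> \<phi> (t h) = h"
    and "zt \<in> chains G 2" and "push (map \<phi>) zt = zchain n xs ys"
    and "c \<in> coker_chains G \<phi> 1"
    and "\<exists>w1\<in>chains H 3. \<exists>w2\<in>chains G 2.
           tot_bd G H \<phi> (w1, w2) = ((\<lambda>_. 0), (\<lambda>m. eps c m + bd G zt m))"
  shows "psi G H \<phi> c = fphi G H \<phi> t n xs ys"
proof -
  interpret fs: fsetup G H \<phi> t using assms(1,2,3,7) by (simp add: fsetup_def)
  interpret Ac: comm_group "KmodGamma G H \<phi>" by (rule fs.grpA)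
  obtain w1 w2 where w1: "w1 \<in> chains H 3" and w2: "w2 \<in> chains G 2"
    and tb: "tot_bd G H \<phi> (w1, w2) = ((\<lambda>_. 0), (\<lambda>m. eps c m + bd G zt m))"
    using assms(11) by blast
  have e1: "push (map \<phi>) w2 = (\<lambda>m. - bd H w1 m)"
  proof
    fix m
    have "bd H w1 m + push (map \<phi>) w2 m = 0"
      using tb unfolding tot_bd_def by (simp add: fun_eq_iff)
    thus "push (map \<phi>) w2 m = - bd H w1 m" by simp
  qed
  have e2: "eps c = (\<lambda>m. - bd G w2 m + - bd G zt m)"
  proof
    fix m
    have "- bd G w2 m = eps c m + bd G zt m"
      using tb unfolding tot_bd_def by (simp add: fun_eq_iff)
    thus "eps c m = - bd G w2 m + - bd G zt m" by simp
  qed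
  define TG where "TG = fst ` supp c \<union> snd ` supp c \<union> (\<Union>l\<in>supp w2 \<union> supp zt. (\<lambda>i. face G i l) ` {..2})"
  define TH where "TH = map \<phi> ` (supp w2 \<union> supp zt) \<union> (\<Union>l\<in>supp w1. (\<lambda>i. face H i l) ` {..3})
      \<union> (\<lambda>i. [xs i, ys i]) ` {1..2*n}"
  have fc: "finite (supp c)" using assms(10) by (simp add: coker_chains_def)
  have fTG: "finite TG" unfolding TG_def using fc chains_fin[OF w2] chains_fin[OF assms(8)] by auto
  have fTH: "finite TH" unfolding TH_def using chains_fin[OF w1] chains_fin[OF w2] chains_fin[OF assms(8)] by auto
  have kapF: "kap G H \<phi> t \<in> UNIV \<rightarrow> carrier (KmodGamma G H \<phi>)" by (rule fs.kapF)
  have betF: "bet G H \<phi> t \<in> UNIV \<rightarrow> carrier (KmodGamma G H \<phi>)" by (rule fs.betF)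
  have "psi G H \<phi> c = Lin (KmodGamma G H \<phi>) (kap G H \<phi> t) (eps c) TG"
    by (rule fs.psi_Lin[OF assms(10) fTG]) (auto simp: TG_def)
  also have "\<dots> = inv\<^bsub>KmodGamma G H \<phi>\<^esub> (Lin (KmodGamma G H \<phi>) (kap G H \<phi> t) (bd G w2) TG) \<otimes>\<^bsub>KmodGamma G H \<phi>\<^esub>
      inv\<^bsub>KmodGamma G H \<phi>\<^esub> (Lin (KmodGamma G H \<phi>) (kap G H \<phi> t) (bd G zt) TG)"
    unfolding e2 Ac.Lin_add[OF kapF] Ac.Lin_neg[OF kapF] by (rule refl)
  also have "\<dots> = Lin (KmodGamma G H \<phi>) (bet G H \<phi> t) (push (map \<phi>) w2) TH \<otimes>\<^bsub>KmodGamma G H \<phi>\<^esub>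
      Lin (KmodGamma G H \<phi>) (bet G H \<phi> t) (push (map \<phi>) zt) TH"
  proof -
    have b2: "inv\<^bsub>KmodGamma G H \<phi>\<^esub> (Lin (KmodGamma G H \<phi>) (kap G H \<phi> t) (bd G w2) TG)
        = Lin (KmodGamma G H \<phi>) (bet G H \<phi> t) (push (map \<phi>) w2) TH"
      by (rule fs.bdG_push[OF w2 fTG _ fTH]) (auto simp: TG_def TH_def)
    have bz: "inv\<^bsub>KmodGamma G H \<phi>\<^esub> (Lin (KmodGamma G H \<phi>) (kap G H \<phi> t) (bd G zt) TG)
        = Lin (KmodGamma G H \<phi>) (bet G H \<phi> t) (push (map \<phi>) zt) TH"
      by (rule fs.bdG_push[OF assms(8) fTG _ fTH]) (auto simp: TG_def TH_def)
    show ?thesis by (simp only: b2 bz)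
  qed
  also have "\<dots> = Lin (KmodGamma G H \<phi>) (bet G H \<phi> t) (zchain n xs ys) TH"
  proof -
    have "Lin (KmodGamma G H \<phi>) (bet G H \<phi> t) (push (map \<phi>) w2) TH = \<one>\<^bsub>KmodGamma G H \<phi>\<^esub>"
      unfolding e1 Ac.Lin_neg[OF betF]
      by (subst fs.bdH_Lin[OF w1 fTH]) (auto simp: TH_def)
    thus ?thesis unfolding assms(9) using Ac.Lin_closed[OF betF] by simp
  qed
  also have "\<dots> = finprod (KmodGamma G H \<phi>) (\<lambda>i. bet G H \<phi> t [xs i, ys i] [^]\<^bsub>KmodGamma G H \<phi>\<^esub> ((-1::int) ^ i)) {1..2*n}"
    by (rule fs.zchain_Lin[OF fTH]) (auto simp: TH_def)
  also have "\<dots> = fphi G H \<phi> t n xs ys"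
    by (rule fs.fphi_eq[OF assms(5)])
  finally show ?thesis .
qed

end
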